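(* Let $\mathcal{R}$ be a right amenable cell space with finite stabiliser $G_0$, let $(\mathcal{R},Q,N,\delta)$ be a semi-cellular automaton with $Q$ finite and $N$ finite, whose global transition function is $\Delta$, and let $\mathcal{F}=(F_i)_{i\in I}$ be a right Følner net in $\mathcal{R}$. Suppose $\delta$ is $\bullet$-invariant, $Q$ contains at least two elements, and $\Delta$ is not pre-injective. Then $\mathrm{h}_{\mathcal{F}}(\Delta(Q^M))<\log|Q|$.
   Context: A cell space $\mathcal{R}$ consists of a group $G$ acting transitively on the left on a nonempty set $M$ via $\triangleright$, a point $m_0\in M$ and a family $(g_{m_0,m})_{m\in M}$ in $G$ with $g_{m_0,m}\triangleright m_0=m$. $G_0$ is the stabiliser of $m_0$, $G/G_0$ the set of left cosets, with $G$ acting by $g\cdot hG_0=ghG_0$. The right semi-action $\triangleleft\colon M\times G/G_0\to M$ is $m\triangleleft gG_0=g_{m_0,m}g\triangleright m_0$. $\mathcal{R}$ is right amenable if there is a finitely additive probability measure $\mu$ on the power set of $M$ such that $\mu(\{a\triangleleft\mathfrak{g}:a\in A\})=\mu(A)$ whenever $\mathfrak{g}\in G/G_0$, $A\subseteq M$ and $m\mapsto m\triangleleft\mathfrak{g}$ is injective on $A$. A right Følner net in $\mathcal{R}$ is a net $(F_i)_{i\in I}$ (over a directed set) of nonempty finite subsets of $M$ with $\lim_{i}\frac{|F_i\setminus\{m: m\triangleleft\mathfrak{g}\in F_i\}|}{|F_i|}=0$ for every $\mathfrak{g}\in G/G_0$. A semi-cellular automaton is $(\mathcal{R},Q,N,\delta)$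 with $Q$ a set, $N\subseteq G/G_0$ with $G_0\cdot N\subseteq N$, $\delta\colon Q^N\to Q$; its global transition function is $\Delta(c)(m)=\delta(n\mapsto c(m\triangleleft n))$. $\delta$ is $\bullet$-invariant if $\delta(g_0\bullet\ell)=\delta(\ell)$ for all $g_0\in G_0$, $\ell\in Q^N$, where $(g_0\bullet\ell)(n)=\ell(g_0^{-1}\cdot n)$. For $A\subseteq M$, $\pi_A\colon Q^M\to Q^A$ is restriction; $\mathrm{h}_{\mathcal{F}}(X)=\limsup_{i\in I}\frac{\log|\pi_{F_i}(X)|}{|F_i|}$ for $X\subseteq Q^M$. $\Delta$ is pre-injective if for all $c,c'\in Q^M$ such that $\{m: c(m)\neq c'(m)\}$ is finite and $\Delta(c)=\Delta(c')$ we have $c=c'$. *)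

theory Defs
  imports "HOL-Analysis.Analysis" "HOL-Algebra.Group_Action"
begin

definition cell_space :: "('g, 'b) monoid_scheme \<Rightarrow> 'm set \<Rightarrow> ('g \<Rightarrow> 'm \<Rightarrow> 'm) \<Rightarrow> 'm \<Rightarrow> ('m \<Rightarrow> 'g) \<Rightarrow> bool"
  where "cell_space G M act m0 gf \<longleftrightarrow>
    group G \<and> transitive_action G M act \<and> m0 \<in> M \<and>
    (\<forall>m\<in>M. gf m \<in> carrier G \<and> act (gf m) m0 = m)"

definition stab0 :: "('g, 'b) monoid_scheme \<Rightarrow> ('g \<Rightarrow> 'm \<Rightarrow> 'm) \<Rightarrow> 'm \<Rightarrow> 'g set"
  where "stab0 G act m0 = stabilizer G act m0"

definition lcosets0 :: "('g, 'b) monoid_scheme \<Rightarrow> ('g \<Rightarrow> 'm \<Rightarrow> 'm) \<Rightarrow> 'm \<Rightarrow> 'g set set"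
  where "lcosets0 G act m0 = {g <#\<^bsub>G\<^esub> stab0 G act m0 | g. g \<in> carrier G}"

text \<open>Right semi-action: m \<triangleleft> gG0 = (gf m * g) \<triangleright> m0 (independent of the chosen representative g).\<close>
definition rsemi :: "('g, 'b) monoid_scheme \<Rightarrow> ('g \<Rightarrow> 'm \<Rightarrow> 'm) \<Rightarrow> 'm \<Rightarrow> ('m \<Rightarrow> 'g) \<Rightarrow> 'm \<Rightarrow> 'g set \<Rightarrow> 'm"
  where "rsemi G act m0 gf m C = act (gf m \<otimes>\<^bsub>G\<^esub> (SOME g. g \<in> C)) m0"

definition right_amenable :: "('g, 'b) monoid_scheme \<Rightarrow> 'm set \<Rightarrow> ('g \<Rightarrow> 'm \<Rightarrow> 'm) \<Rightarrow> 'm \<Rightarrow> ('m \<Rightarrow> 'g) \<Rightarrow> bool"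
  where "right_amenable G M act m0 gf \<longleftrightarrow>
    (\<exists>\<mu> :: 'm set \<Rightarrow> real.
       (\<forall>A. A \<subseteq> M \<longrightarrow> \<mu> A \<ge> 0) \<and> \<mu> M = 1 \<and>
       (\<forall>A B. A \<subseteq> M \<longrightarrow> B \<subseteq> M \<longrightarrow> A \<inter> B = {} \<longrightarrow> \<mu> (A \<union> B) = \<mu> A + \<mu> B) \<and>
       (\<forall>C\<in>lcosets0 G act m0. \<forall>A. A \<subseteq> M \<longrightarrow> inj_on (\<lambda>m. rsemi G act m0 gf m C) A \<longrightarrow>
          \<mu> ((\<lambda>a. rsemi G act m0 gf a C) ` A) = \<mu> A))"

definition directed_set :: "'i set \<Rightarrow> ('i \<Rightarrow> 'i \<Rightarrow> bool) \<Rightarrow> bool"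
  where "directed_set I rel \<longleftrightarrow> I \<noteq> {} \<and> (\<forall>i\<in>I. rel i i) \<and>
    (\<forall>i\<in>I. \<forall>j\<in>I. \<forall>k\<in>I. rel i j \<longrightarrow> rel j k \<longrightarrow> rel i k) \<and>
    (\<forall>i\<in>I. \<forall>j\<in>I. \<exists>k\<in>I. rel i k \<and> rel j k)"

definition net_filter :: "'i set \<Rightarrow> ('i \<Rightarrow> 'i \<Rightarrow> bool) \<Rightarrow> 'i filter"
  where "net_filter I rel = (INF i\<in>I. principal {j\<in>I. rel i j})"

definition right_folner_net :: "('g, 'b) monoid_scheme \<Rightarrow> 'm set \<Rightarrow> ('g \<Rightarrow> 'm \<Rightarrow> 'm) \<Rightarrow> 'm \<Rightarrow> ('m \<Rightarrow> 'g) \<Rightarrow>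
    'i set \<Rightarrow> ('i \<Rightarrow> 'i \<Rightarrow> bool) \<Rightarrow> ('i \<Rightarrow> 'm set) \<Rightarrow> bool"
  where "right_folner_net G M act m0 gf I rel F \<longleftrightarrow>
    directed_set I rel \<and>
    (\<forall>i\<in>I. F i \<subseteq> M \<and> finite (F i) \<and> F i \<noteq> {}) \<and>
    (\<forall>C\<in>lcosets0 G act m0.
       ((\<lambda>i. real (card (F i - {m \<in> M. rsemi G act m0 gf m C \<in> F i})) / real (card (F i)))
          \<longlongrightarrow> 0) (net_filter I rel))"

definition global_trans :: "('g, 'b) monoid_scheme \<Rightarrow> 'm set \<Rightarrow> ('g \<Rightarrow> 'm \<Rightarrow> 'm) \<Rightarrow> 'm \<Rightarrow> ('m \<Rightarrow> 'g) \<Rightarrow>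
    'g set set \<Rightarrow> (('g set \<Rightarrow> 'q) \<Rightarrow> 'q) \<Rightarrow> ('m \<Rightarrow> 'q) \<Rightarrow> ('m \<Rightarrow> 'q)"
  where "global_trans G M act m0 gf N \<delta> c =
    (\<lambda>m\<in>M. \<delta> (\<lambda>n\<in>N. c (rsemi G act m0 gf m n)))"

definition bullet_invariant :: "('g, 'b) monoid_scheme \<Rightarrow> ('g \<Rightarrow> 'm \<Rightarrow> 'm) \<Rightarrow> 'm \<Rightarrow>
    'q set \<Rightarrow> 'g set set \<Rightarrow> (('g set \<Rightarrow> 'q) \<Rightarrow> 'q) \<Rightarrow> bool"
  where "bullet_invariant G act m0 Q N \<delta> \<longleftrightarrow>
    (\<forall>g0\<in>stab0 G act m0. \<forall>l\<in>N \<rightarrow>\<^sub>E Q.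
       \<delta> (\<lambda>n\<in>N. l (inv\<^bsub>G\<^esub> g0 <#\<^bsub>G\<^esub> n)) = \<delta> l)"

definition pre_injective :: "'m set \<Rightarrow> 'q set \<Rightarrow> (('m \<Rightarrow> 'q) \<Rightarrow> ('m \<Rightarrow> 'q)) \<Rightarrow> bool"
  where "pre_injective M Q \<Delta> \<longleftrightarrow>
    (\<forall>c\<in>M \<rightarrow>\<^sub>E Q. \<forall>c'\<in>M \<rightarrow>\<^sub>E Q.
       finite {m\<in>M. c m \<noteq> c' m} \<longrightarrow> \<Delta> c = \<Delta> c' \<longrightarrow> c = c')"

definition entropy :: "'i set \<Rightarrow> ('i \<Rightarrow> 'i \<Rightarrow> bool) \<Rightarrow> ('i \<Rightarrow> 'm set) \<Rightarrow> ('m \<Rightarrow> 'q) set \<Rightarrow> ereal"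
  where "entropy I rel F X =
    Limsup (net_filter I rel)
      (\<lambda>i. ereal (ln (real (card ((\<lambda>c. restrict c (F i)) ` X))) / real (card (F i))))"

end

theory Submission
  imports Defs
begin


locale CS = group_action G M act for G :: "('g, 'b) monoid_scheme" (structure) and M :: "'m set" and act +
  fixes m0 :: 'm and gf :: "'m \<Rightarrow> 'g"
  assumes m0M: "m0 \<in> M"
    and gfC: "\<And>m. m \<in> M \<Longrightarrow> gf m \<in> carrier G"
    and gfA: "\<And>m. m \<in> M \<Longrightarrow> act (gf m) m0 = m"
    and G0fin: "finite (stabilizer G act m0)"

sublocale CS \<subseteq> group G
  using group_hom group_hom.axioms(1) by auto

context CS begin

abbreviation "G0 \<equiv> stabilizer G act m0"

definition pp :: "'g set \<Rightarrow> 'm" where "pp C = act (SOME g. g \<in> C) m0"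

lemma actM: "g \<in> carrier G \<Longrightarrow> x \<in> M \<Longrightarrow> act g x \<in> M"
  using element_image by blast

lemma comp: "g \<in> carrier G \<Longrightarrow> h \<in> carrier G \<Longrightarrow> x \<in> M \<Longrightarrow> act (g \<otimes> h) x = act g (act h x)"
  using composition_rule by blast

lemma act_one: "x \<in> M \<Longrightarrow> act \<one> x = x"
  by (metis id_eq_one restrict_apply')

lemma act_inv1: "g \<in> carrier G \<Longrightarrow> x \<in> M \<Longrightarrow> act (inv g) (act g x) = x"
  by (metis act_one comp inv_closed l_inv)

lemma act_inv2: "g \<in> carrier G \<Longrightarrow> x \<in> M \<Longrightarrow> act g (act (inv g) x) = x"
  by (metis act_one comp inv_closed r_inv)

lemma act_inj: "g \<in> carrier G \<Longrightarrow> x \<in> M \<Longrightarrow> y \<in> M \<Longrightarrow> act g x = act g y \<longleftrightarrow> x = y"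
  by (metis act_inv1)

lemma G0_sub: "G0 \<subseteq> carrier G" by (rule stabilizer_subset)

lemma G0_mem: "h \<in> G0 \<longleftrightarrow> h \<in> carrier G \<and> act h m0 = m0"
  by (simp add: stabilizer_def)

lemma coset_pp: assumes "g \<in> carrier G" shows "pp (g <# G0) = act g m0"
proof -
  have "g \<otimes> \<one> \<in> g <# G0" unfolding l_coset_def using stabilizer_one_closed[OF m0M] by blast
  hence "(SOME s. s \<in> g <# G0) \<in> g <# G0" by (rule someI)
  then obtain h where h: "h \<in> G0" "(SOME s. s \<in> g <# G0) = g \<otimes> h" unfolding l_coset_def by blast
  show ?thesis unfolding pp_def h(2) using h(1) assms comp[of g h m0] m0M G0_mem by auto
qed

lemma lcosets_E: assumes "C \<in> lcosets0 G act m0" obtains g where "g \<in> carrier G" "C = g <# G0"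
  using assms unfolding lcosets0_def stab0_def by blast

lemma pp_M: "C \<in> lcosets0 G act m0 \<Longrightarrow> pp C \<in> M"
  by (metis lcosets_E coset_pp actM m0M)

lemma rsemi_eq: assumes "m \<in> M" "C \<in> lcosets0 G act m0"
  shows "rsemi G act m0 gf m C = act (gf m) (pp C)"
proof -
  obtain g where g: "g \<in> carrier G" "C = g <# G0" using lcosets_E[OF assms(2)] .
  have "g \<otimes> \<one> \<in> g <# G0" unfolding l_coset_def using stabilizer_one_closed[OF m0M] by blast
  hence "(SOME s. s \<in> C) \<in> C" using g(2) by (metis someI)
  hence "(SOME s. s \<in> C) \<in> carrier G" using g G0_sub unfolding l_coset_def by auto
  thus ?thesis unfolding rsemi_def pp_def using comp gfC assms(1) m0M by auto
qed

lemma cos_of: assumes "l \<in> M" shows "gf l <# G0 \<in> lcosets0 G act m0" "pp (gf l <# G0) = l"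
  using assms gfC gfA coset_pp unfolding lcosets0_def stab0_def by auto

lemma pp_mult: assumes "g0 \<in> carrier G" "C \<in> lcosets0 G act m0"
  shows "g0 <# C \<in> lcosets0 G act m0" "pp (g0 <# C) = act g0 (pp C)"
proof -
  obtain g where g: "g \<in> carrier G" "C = g <# G0" using lcosets_E[OF assms(2)] .
  have e: "g0 <# C = (g0 \<otimes> g) <# G0" using g assms lcos_m_assoc G0_sub by auto
  show "g0 <# C \<in> lcosets0 G act m0" unfolding e lcosets0_def stab0_def using g assms by auto
  have e2: "g0 <# (g <# G0) = (g0 \<otimes> g) <# G0" using g assms lcos_m_assoc G0_sub by auto
  show "pp (g0 <# C) = act g0 (pp C)" unfolding g(2) e2 using coset_pp g assms comp m0M by auto
qed

lemma stab_fin: assumes "a \<in> M"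
  shows "finite {g \<in> carrier G. act g a = b} \<and> card {g \<in> carrier G. act g a = b} \<le> card G0"
proof (cases "{g \<in> carrier G. act g a = b} = {}")
  case True thus ?thesis unfolding True by simp
next
  case False
  then obtain g1 where g1: "g1 \<in> carrier G" "act g1 a = b" by blast
  define f where "f g = inv (gf a) \<otimes> (inv g1 \<otimes> g) \<otimes> gf a" for g
  have ga: "gf a \<in> carrier G" using gfC assms by auto
  have inj: "inj_on f {g \<in> carrier G. act g a = b}"
    unfolding f_def inj_on_def using ga g1 by (auto simp: m_assoc)
  have im: "f ` {g \<in> carrier G. act g a = b} \<subseteq> G0"
  proof
    fix x assume "x \<in> f ` {g \<in> carrier G. act g a = b}"
    then obtain g where g: "g \<in> carrier G" "act g a = b" "x = f g" by blast
    have "act x m0 = act (inv (gf a)) (act (inv g1) (act g (act (gf a) m0)))"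
      unfolding g(3) f_def using g ga g1 m0M by (simp add: comp actM)
    also have "\<dots> = act (inv (gf a)) (act (inv g1) (act g1 a))" using g g1 gfA assms by simp
    also have "\<dots> = act (inv (gf a)) (act (gf a) m0)" using act_inv1[OF g1(1) assms] gfA[OF assms] g1(2) by simp
    also have "\<dots> = m0" using ga m0M act_inv1 by simp
    finally show "x \<in> G0" using G0_mem g ga g1 unfolding g(3) f_def by auto
  qed
  show ?thesis using inj im G0fin by (meson card_inj_on_le inj_on_finite)
qed

lemma stab_fin2: assumes "a \<in> M"
  shows "finite ((\<lambda>g. act g m0) ` {g \<in> carrier G. act g a = b})"
    "card ((\<lambda>g. act g m0) ` {g \<in> carrier G. act g a = b}) \<le> card G0"
  using stab_fin[OF assms] card_image_le le_trans by blast+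

end



lemma count_patterns:
  fixes U :: "'a set" and T :: "'t set" and b :: "'t \<Rightarrow> 'a set" and p :: "'t \<Rightarrow> 'a \<Rightarrow> 'q" and Q :: "'q set"
  assumes "finite T" "finite U" "finite Q"
    "\<forall>h\<in>T. b h \<subseteq> U \<and> card (b h) = e"
    "\<forall>h\<in>T. \<forall>h'\<in>T. h \<noteq> h' \<longrightarrow> b h \<inter> b h' = {}"
    "\<forall>h\<in>T. p h \<in> b h \<rightarrow>\<^sub>E Q"
  shows "card {w \<in> U \<rightarrow>\<^sub>E Q. \<forall>h\<in>T. restrict w (b h) \<noteq> p h} * card Q ^ (card T * e)
          \<le> (card Q ^ e - 1) ^ card T * card Q ^ card U"
  using assms
proof (induction T arbitrary: U rule: finite_induct)
  case empty
  have "{w \<in> U \<rightarrow>\<^sub>E Q. \<forall>h\<in>{}. restrict w (b h) \<noteq> p h} = U \<rightarrow>\<^sub>E Q" by simp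
  then show ?case using card_PiE[OF empty.prems(1), of "\<lambda>_. Q"] by simp
next
  case (insert h T)
  define B where "B = b h"
  define U' where "U' = U - B"
  define W where "W = {w \<in> U \<rightarrow>\<^sub>E Q. \<forall>h\<in>insert h T. restrict w (b h) \<noteq> p h}"
  define W' where "W' = {w \<in> U' \<rightarrow>\<^sub>E Q. \<forall>h\<in>T. restrict w (b h) \<noteq> p h}"
  define P where "P = (B \<rightarrow>\<^sub>E Q) - {p h}"
  define f where "f w = (restrict w U', restrict w B)" for w :: "'a \<Rightarrow> 'q"
  have BU: "B \<subseteq> U" "card B = e" using insert.prems(3) unfolding B_def by simp_all
  have finB: "finite B" using finite_subset[OF BU(1) insert.prems(1)] .
  have inj: "inj_on f W"
  proof (rule inj_onI)
    fix w v assume wW: "w \<in> W" and vW: "v \<in> W" and fe: "f w = f v"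
    have w: "w \<in> U \<rightarrow>\<^sub>E Q" using wW unfolding W_def by simp
    have v: "v \<in> U \<rightarrow>\<^sub>E Q" using vW unfolding W_def by simp
    have e1: "restrict w U' = restrict v U'" and e2: "restrict w B = restrict v B"
      using fe unfolding f_def by (simp_all only: prod.inject)
    show "w = v"
    proof (rule ext)
      fix x
      show "w x = v x"
      proof (cases "x \<in> U")
        case True
        then show ?thesis
        proof (cases "x \<in> B")
          case True
          have "restrict w B x = restrict v B x" using e2 by (rule arg_cong)
          then show ?thesis using True by simp
        next
          case False
          have xU: "x \<in> U'" unfolding U'_def using False \<open>x \<in> U\<close> by simp
          have "restrict w U' x = restrict v U' x" using e1 by (rule arg_cong)
          then show ?thesis using xU by simp
        qed
      next
        case False then show ?thesis using PiE_arb[OF w False] PiE_arb[OF v False] by simp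
      qed
    qed
  qed
  have sub: "f ` W \<subseteq> W' \<times> P"
  proof
    fix y assume "y \<in> f ` W"
    then obtain w where w: "w \<in> W" "y = f w" by blast
    have wU: "w \<in> U \<rightarrow>\<^sub>E Q" and wc: "\<forall>h\<in>insert h T. restrict w (b h) \<noteq> p h"
      using w(1) unfolding W_def by simp_all
    have wUQ: "\<forall>x\<in>U. w x \<in> Q" using wU by (simp add: PiE_iff)
    have 1: "restrict w U' \<in> U' \<rightarrow>\<^sub>E Q" unfolding restrict_PiE_iff U'_def using wUQ by blast
    have 2: "\<forall>h'\<in>T. restrict (restrict w U') (b h') \<noteq> p h'"
    proof
      fix h' assume h': "h' \<in> T"
      have "h' \<noteq> h" using h' insert.hyps by auto
      have "b h' \<inter> b h = {}" using insert.prems(4) h' \<open>h' \<noteq> h\<close> by simp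
      moreover have "b h' \<subseteq> U" using insert.prems(3) h' by simp
      ultimately have "U' \<inter> b h' = b h'" unfolding U'_def B_def by blast
      hence "restrict (restrict w U') (b h') = restrict w (b h')" by (simp only: restrict_restrict)
      thus "restrict (restrict w U') (b h') \<noteq> p h'" using wc h' by simp
    qed
    have 3: "restrict w B \<in> B \<rightarrow>\<^sub>E Q" unfolding restrict_PiE_iff using wUQ BU(1) by blast
    have 4: "restrict w B \<noteq> p h" using wc unfolding B_def by simp
    have "restrict w B \<in> P" unfolding P_def using 3 4 by simp
    moreover have "restrict w U' \<in> W'" unfolding W'_def using 1 2 by simp
    ultimately show "y \<in> W' \<times> P" unfolding w(2) f_def by simp
  qed
  have finU': "finite U'" using insert.prems(1) unfolding U'_def by simp
  have finW': "finite W'" unfolding W'_def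
    by (rule finite_subset[OF _ finite_PiE[OF finU', of "\<lambda>_. Q"]]) (use insert.prems(2) in auto)
  have finP: "finite P" unfolding P_def using finite_PiE[OF finB, of "\<lambda>_. Q"] insert.prems(2) by simp
  have cP: "card P = card Q ^ e - 1"
  proof -
    have "p h \<in> B \<rightarrow>\<^sub>E Q" using insert.prems(5) unfolding B_def by simp
    moreover have "card (B \<rightarrow>\<^sub>E Q) = card Q ^ e" using card_PiE[OF finB, of "\<lambda>_. Q"] BU(2) by simp
    ultimately show ?thesis unfolding P_def by (simp add: card_Diff_singleton)
  qed
  have c1: "card W \<le> card W' * (card Q ^ e - 1)"
    using card_inj_on_le[OF inj sub] finW' finP cP by (simp add: card_cartesian_product)
  have IH: "card W' * card Q ^ (card T * e) \<le> (card Q ^ e - 1) ^ card T * card Q ^ card U'"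
    unfolding W'_def
  proof (rule insert.IH)
    show "finite U'" by (rule finU')
    show "\<forall>h'\<in>T. b h' \<subseteq> U' \<and> card (b h') = e"
    proof
      fix h' assume h': "h' \<in> T"
      have "h' \<noteq> h" using h' insert.hyps by auto
      have "b h' \<inter> b h = {}" using insert.prems(4) h' \<open>h' \<noteq> h\<close> by simp
      moreover have "b h' \<subseteq> U" "card (b h') = e" using insert.prems(3) h' by simp_all
      ultimately show "b h' \<subseteq> U' \<and> card (b h') = e" unfolding U'_def B_def by blast
    qed
    show "finite Q" by (rule insert.prems(2))
    show "\<forall>h\<in>T. \<forall>h'\<in>T. h \<noteq> h' \<longrightarrow> b h \<inter> b h' = {}" using insert.prems(4) by simp
    show "\<forall>h\<in>T. p h \<in> b h \<rightarrow>\<^sub>E Q" using insert.prems(5) by simp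
  qed
  have cU: "card U' = card U - e" "e \<le> card U"
    using BU card_Diff_subset[OF finB BU(1)] card_mono[OF insert.prems(1) BU(1)] unfolding U'_def by simp_all
  have "card W * card Q ^ (card (insert h T) * e) = card W * card Q ^ (card T * e) * card Q ^ e"
    using insert.hyps by (simp add: power_add algebra_simps)
  also have "\<dots> \<le> card W' * (card Q ^ e - 1) * card Q ^ (card T * e) * card Q ^ e"
    using c1 by simp
  also have "\<dots> = (card W' * card Q ^ (card T * e)) * ((card Q ^ e - 1) * card Q ^ e)"
    by (simp add: algebra_simps)
  also have "\<dots> \<le> ((card Q ^ e - 1) ^ card T * card Q ^ (card U - e)) * ((card Q ^ e - 1) * card Q ^ e)"
    using IH cU by (intro mult_right_mono) auto
  also have "\<dots> = (card Q ^ e - 1) ^ card (insert h T) * (card Q ^ (card U - e) * card Q ^ e)"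
    using insert.hyps by (simp add: algebra_simps)
  also have "\<dots> = (card Q ^ e - 1) ^ card (insert h T) * card Q ^ card U"
    using cU by (simp add: power_add[symmetric])
  finally show ?case unfolding W_def .
qed




locale CA = CS G M act m0 gf for G :: "('g, 'b) monoid_scheme" (structure) and M :: "'m set" and act m0 gf +
  fixes Q :: "'q set" and N :: "'g set set" and \<delta> :: "('g set \<Rightarrow> 'q) \<Rightarrow> 'q"
  assumes Qfin: "finite Q" and Qne: "Q \<noteq> {}"
    and N_sub: "N \<subseteq> lcosets0 G act m0" and N_fin: "finite N"
    and N_inv: "\<forall>g0\<in>stab0 G act m0. \<forall>n\<in>N. g0 <# n \<in> N"
    and \<delta>_Q: "\<forall>l\<in>N \<rightarrow>\<^sub>E Q. \<delta> l \<in> Q"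
    and binv: "bullet_invariant G act m0 Q N \<delta>"
begin

abbreviation "Del \<equiv> global_trans G M act m0 gf N \<delta>"

lemma ppN: "n \<in> N \<Longrightarrow> pp n \<in> M" using pp_M N_sub by blast

lemma Delta_M: "m \<in> M \<Longrightarrow> Del z m = \<delta> (\<lambda>n\<in>N. z (act (gf m) (pp n)))"
  unfolding global_trans_def using rsemi_eq N_sub by (auto intro!: arg_cong[where f=\<delta>] restrict_ext)

lemma Delta_out: "m \<notin> M \<Longrightarrow> Del z m = undefined"
  unfolding global_trans_def by simp

lemma Delta_PiE: "z \<in> M \<rightarrow>\<^sub>E Q \<Longrightarrow> Del z \<in> M \<rightarrow>\<^sub>E Q"
proof -
  assume z: "z \<in> M \<rightarrow>\<^sub>E Q"
  have "\<And>m. m \<in> M \<Longrightarrow> Del z m \<in> Q"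
  proof -
    fix m assume m: "m \<in> M"
    have "(\<lambda>n\<in>N. z (act (gf m) (pp n))) \<in> N \<rightarrow>\<^sub>E Q"
      using z m gfC ppN actM by (auto simp: PiE_iff)
    thus "Del z m \<in> Q" using Delta_M[OF m] \<delta>_Q by simp
  qed
  thus ?thesis using Delta_out by (auto simp: PiE_iff extensional_def)
qed

lemma Delta_local: "m \<in> M \<Longrightarrow> (\<And>n. n \<in> N \<Longrightarrow> z (act (gf m) (pp n)) = z' (act (gf m) (pp n))) \<Longrightarrow> Del z m = Del z' m"
  using Delta_M by (metis (no_types, lifting) restrict_ext)

lemma Delta_any: assumes z: "z \<in> M \<rightarrow>\<^sub>E Q" and k: "k \<in> carrier G"
  shows "Del z (act k m0) = \<delta> (\<lambda>n\<in>N. z (act k (pp n)))"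
proof -
  define m where "m = act k m0"
  have m: "m \<in> M" unfolding m_def using k m0M actM by simp
  define g where "g = gf m"
  have g: "g \<in> carrier G" "act g m0 = m" unfolding g_def using gfC gfA m by auto
  define g0 where "g0 = inv g \<otimes> k"
  have g0C: "g0 \<in> carrier G" unfolding g0_def using g k by simp
  have "act g0 m0 = act (inv g) m" unfolding g0_def m_def using g k m0M comp by simp
  also have "\<dots> = m0" using g act_inv1 m0M by metis
  finally have g0: "g0 \<in> G0" using G0_mem g0C by simp
  have kk: "k = g \<otimes> g0" unfolding g0_def using g k by (simp add: m_assoc[symmetric])
  define l where "l = (\<lambda>n\<in>N. z (act g (pp n)))"
  have lQ: "l \<in> N \<rightarrow>\<^sub>E Q" unfolding l_def using z g ppN actM by (auto simp: PiE_iff)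
  have ig0: "inv g0 \<in> G0" using stabilizer_m_inv_closed[OF m0M g0] .
  have "\<delta> (\<lambda>n\<in>N. l (inv (inv g0) <# n)) = \<delta> l"
    using binv ig0 lQ unfolding bullet_invariant_def stab0_def by blast
  moreover have "(\<lambda>n\<in>N. l (inv (inv g0) <# n)) = (\<lambda>n\<in>N. z (act k (pp n)))"
  proof (rule restrict_ext)
    fix n assume n: "n \<in> N"
    have nl: "n \<in> lcosets0 G act m0" using n N_sub by blast
    have ii: "inv (inv g0) = g0" using g0C by simp
    have "g0 <# n \<in> N" using N_inv g0 n unfolding stab0_def by blast
    hence "l (g0 <# n) = z (act g (pp (g0 <# n)))" unfolding l_def by simp
    also have "\<dots> = z (act g (act g0 (pp n)))" using pp_mult[OF g0C nl] by simp
    also have "\<dots> = z (act k (pp n))" unfolding kk using comp g g0C ppN n by simp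
    finally show "l (inv (inv g0) <# n) = z (act k (pp n))" unfolding ii .
  qed
  ultimately show ?thesis using Delta_M[OF m] unfolding m_def[symmetric] l_def g_def by simp
qed

end




locale CB = CA G M act m0 gf Q N \<delta> for G :: "('g, 'b) monoid_scheme" (structure) and M :: "'m set" and act m0 gf and Q :: "'q set" and N \<delta> +
  fixes c c' :: "'m \<Rightarrow> 'q"
  assumes cQ: "c \<in> M \<rightarrow>\<^sub>E Q" and c'Q: "c' \<in> M \<rightarrow>\<^sub>E Q"
    and Dfin: "finite {m\<in>M. c m \<noteq> c' m}" and Dne: "{m\<in>M. c m \<noteq> c' m} \<noteq> {}"
    and cc: "Del c = Del c'"
begin

definition "DD = {m\<in>M. c m \<noteq> c' m}"
definition "Gs = {g\<in>carrier G. \<exists>n'\<in>N. act g (pp n') \<in> DD}"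
definition "EE = DD \<union> (\<lambda>(g,n). act g (pp n)) ` (Gs \<times> N)"

lemma DD_M: "DD \<subseteq> M" unfolding DD_def by auto

lemma Gs_fin: "finite Gs"
proof -
  have "Gs = (\<Union>n'\<in>N. \<Union>d\<in>DD. {g\<in>carrier G. act g (pp n') = d})" unfolding Gs_def by blast
  moreover have "finite (\<Union>n'\<in>N. \<Union>d\<in>DD. {g\<in>carrier G. act g (pp n') = d})"
    using N_fin Dfin stab_fin ppN unfolding DD_def by blast
  ultimately show ?thesis by simp
qed

lemma EE_fin: "finite EE" unfolding EE_def using Gs_fin N_fin Dfin DD_def by simp

lemma EE_M: "EE \<subseteq> M" unfolding EE_def Gs_def using DD_M actM ppN by auto

lemma DD_EE: "DD \<subseteq> EE" unfolding EE_def by simp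

lemma EE_ne: "EE \<noteq> {}" using DD_EE Dne DD_def by auto

lemma EE_prop: "k \<in> carrier G \<Longrightarrow> n' \<in> N \<Longrightarrow> act k (pp n') \<in> DD \<Longrightarrow> n \<in> N \<Longrightarrow> act k (pp n) \<in> EE"
proof -
  assume a: "k \<in> carrier G" "n' \<in> N" "act k (pp n') \<in> DD" "n \<in> N"
  hence "(k, n) \<in> Gs \<times> N" unfolding Gs_def by blast
  hence "(\<lambda>(g,n). act g (pp n)) (k, n) \<in> (\<lambda>(g,n). act g (pp n)) ` (Gs \<times> N)" by (rule imageI)
  thus ?thesis unfolding EE_def by simp
qed

lemma c_eq_off: "x \<in> M \<Longrightarrow> x \<notin> DD \<Longrightarrow> c x = c' x" unfolding DD_def by simp

definition "tdisj T \<longleftrightarrow> (\<forall>h\<in>T. \<forall>h'\<in>T. h \<noteq> h' \<longrightarrow> act h ` EE \<inter> act h' ` EE = {})"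

lemma tile_modify:
  assumes T: "T \<subseteq> carrier G" and dT: "tdisj T" and z: "z \<in> M \<rightarrow>\<^sub>E Q"
  shows "\<exists>zs\<in>M \<rightarrow>\<^sub>E Q. Del zs = Del z \<and> (\<forall>h\<in>T. \<exists>e\<in>EE. zs (act h e) \<noteq> c e)"
proof -
  define A where "A = {h\<in>T. \<forall>e\<in>EE. z (act h e) = c e}"
  define zs where "zs = (\<lambda>m\<in>M. if \<exists>h\<in>A. m \<in> act h ` EE
      then c' (act (inv (SOME h. h \<in> A \<and> m \<in> act h ` EE)) m) else z m)"
  have AT: "A \<subseteq> T" unfolding A_def by auto
  have uniq: "h' = h" if "h \<in> A" "h' \<in> A" "x \<in> act h ` EE" "x \<in> act h' ` EE" for h h' x
    using dT that AT unfolding tdisj_def by blast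
  have zsA: "zs (act h e) = c' e" if h: "h \<in> A" and e: "e \<in> EE" for h e
  proof -
    have hC: "h \<in> carrier G" using h AT T by auto
    have eM: "e \<in> M" using e EE_M by auto
    have x: "act h e \<in> M" using hC eM actM by simp
    have ex: "\<exists>h'. h' \<in> A \<and> act h e \<in> act h' ` EE" using h e by blast
    have "(SOME h'. h' \<in> A \<and> act h e \<in> act h' ` EE) = h"
      using someI_ex[OF ex] uniq[OF h] e by blast
    thus ?thesis unfolding zs_def using x h e act_inv1[OF hC eM] by auto
  qed
  have zsO: "zs x = z x" if "x \<in> M" "\<forall>h\<in>A. x \<notin> act h ` EE" for x
    unfolding zs_def using that by auto
  have zsQ: "zs \<in> M \<rightarrow>\<^sub>E Q"
  proof -
    have "zs m \<in> Q" if m: "m \<in> M" for m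
    proof (cases "\<exists>h\<in>A. m \<in> act h ` EE")
      case True
      then obtain h e where h: "h \<in> A" "e \<in> EE" "m = act h e" by blast
      thus ?thesis using zsA cQ c'Q EE_M by (auto simp: PiE_iff)
    next
      case False thus ?thesis using zsO m z by (auto simp: PiE_iff)
    qed
    thus ?thesis unfolding zs_def by (auto simp: PiE_iff extensional_def)
  qed
  have a: "\<forall>h\<in>T. \<exists>e\<in>EE. zs (act h e) \<noteq> c e"
  proof
    fix h assume h: "h \<in> T"
    show "\<exists>e\<in>EE. zs (act h e) \<noteq> c e"
    proof (cases "h \<in> A")
      case True
      obtain d where d: "d \<in> DD" using Dne DD_def by auto
      have "zs (act h d) = c' d" using zsA True d DD_EE by auto
      moreover have "c' d \<noteq> c d" using d unfolding DD_def by auto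
      ultimately show ?thesis using d DD_EE by (metis subsetD)
    next
      case False
      then obtain e where e: "e \<in> EE" "z (act h e) \<noteq> c e" using h unfolding A_def by auto
      have hC: "h \<in> carrier G" using h T by auto
      have xM: "act h e \<in> M" using hC e EE_M actM by auto
      have "\<forall>h'\<in>A. act h e \<notin> act h' ` EE"
      proof
        fix h' assume h': "h' \<in> A"
        have "h' \<noteq> h" using h' False by auto
        thus "act h e \<notin> act h' ` EE" using dT h h' AT e unfolding tdisj_def by blast
      qed
      hence "zs (act h e) = z (act h e)" using zsO xM by simp
      thus ?thesis using e by metis
    qed
  qed
  have b: "Del zs = Del z"
  proof
    fix m
    show "Del zs m = Del z m"
    proof (cases "m \<in> M")
      case False thus ?thesis using Delta_out by simp
    next
      case m: True
      define g where "g = gf m"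
      have g: "g \<in> carrier G" "act g m0 = m" unfolding g_def using gfC gfA m by auto
      show ?thesis
      proof (cases "\<exists>h\<in>A. \<exists>n'\<in>N. act g (pp n') \<in> act h ` DD")
        case True
        then obtain h n' d where h: "h \<in> A" and n': "n' \<in> N" and d: "d \<in> DD" and hd: "act g (pp n') = act h d" by blast
        have hC: "h \<in> carrier G" using h AT T by auto
        define k where "k = inv h \<otimes> g"
        have kC: "k \<in> carrier G" unfolding k_def using hC g by simp
        have "act k (pp n') = act (inv h) (act g (pp n'))" unfolding k_def using comp hC g ppN n' by simp
        also have "\<dots> = d" unfolding hd using act_inv1 hC d DD_M by auto
        finally have kD: "act k (pp n') \<in> DD" using d by simp
        have kE: "\<And>n. n \<in> N \<Longrightarrow> act k (pp n) \<in> EE" using EE_prop[OF kC n' kD] .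
        have gk: "\<And>n. n \<in> N \<Longrightarrow> act g (pp n) = act h (act k (pp n))"
        proof -
          fix n assume n: "n \<in> N"
          have "h \<otimes> k = g" unfolding k_def using hC g by (simp add: m_assoc[symmetric])
          thus "act g (pp n) = act h (act k (pp n))" using comp[OF hC kC ppN[OF n]] by simp
        qed
        have e1: "Del z m = \<delta> (\<lambda>n\<in>N. c (act k (pp n)))"
        proof -
          have "Del z m = \<delta> (\<lambda>n\<in>N. z (act g (pp n)))" using Delta_M[OF m] g_def by simp
          also have "(\<lambda>n\<in>N. z (act g (pp n))) = (\<lambda>n\<in>N. c (act k (pp n)))"
            using gk kE h unfolding A_def by (auto intro!: restrict_ext)
          finally show ?thesis .
        qed
        have e2: "Del zs m = \<delta> (\<lambda>n\<in>N. c' (act k (pp n)))"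
        proof -
          have "Del zs m = \<delta> (\<lambda>n\<in>N. zs (act g (pp n)))" using Delta_M[OF m] g_def by simp
          also have "(\<lambda>n\<in>N. zs (act g (pp n))) = (\<lambda>n\<in>N. c' (act k (pp n)))"
            using gk kE h zsA by (auto intro!: restrict_ext)
          finally show ?thesis .
        qed
        have "\<delta> (\<lambda>n\<in>N. c (act k (pp n))) = Del c (act k m0)" using Delta_any[OF cQ kC] by simp
        also have "\<dots> = Del c' (act k m0)" using cc by simp
        also have "\<dots> = \<delta> (\<lambda>n\<in>N. c' (act k (pp n)))" using Delta_any[OF c'Q kC] by simp
        finally show ?thesis using e1 e2 by simp
      next
        case False
        have "zs (act (gf m) (pp n)) = z (act (gf m) (pp n))" if n: "n \<in> N" for n
        proof -
          define x where "x = act g (pp n)"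
          have xM: "x \<in> M" unfolding x_def using g ppN n actM by simp
          show ?thesis
          proof (cases "\<exists>h\<in>A. x \<in> act h ` EE")
            case True
            then obtain h e where h: "h \<in> A" and e: "e \<in> EE" and xe: "x = act h e" by blast
            have "e \<notin> DD" using False h n xe unfolding x_def by blast
            hence "c' e = c e" using c_eq_off e EE_M by auto
            also have "\<dots> = z x" using h e xe unfolding A_def by simp
            finally show ?thesis using zsA[OF h e] xe unfolding x_def g_def by simp
          next
            case False thus ?thesis using zsO xM unfolding x_def g_def by simp
          qed
        qed
        thus ?thesis using Delta_local[OF m] by blast
      qed
    qed
  qed
  show ?thesis using zsQ a b by blast
qed

end



context CB begin

definition "UU F = F \<union> (\<lambda>(m,n). act (gf m) (pp n)) ` (F \<times> N)"

lemma UU_fin: "finite F \<Longrightarrow> finite (UU F)" unfolding UU_def using N_fin by simp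

lemma UU_M: "F \<subseteq> M \<Longrightarrow> UU F \<subseteq> M" unfolding UU_def using gfC ppN actM by auto

lemma UU_nb: "m \<in> F \<Longrightarrow> n \<in> N \<Longrightarrow> act (gf m) (pp n) \<in> UU F"
proof -
  assume "m \<in> F" "n \<in> N"
  hence "(\<lambda>(m,n). act (gf m) (pp n)) (m, n) \<in> (\<lambda>(m,n). act (gf m) (pp n)) ` (F \<times> N)" by (intro imageI) simp
  thus ?thesis unfolding UU_def by simp
qed

lemma UU_card: assumes F: "finite F" "F \<subseteq> M"
  shows "card (UU F) \<le> card F + (\<Sum>n\<in>N. card (F - {m\<in>M. rsemi G act m0 gf m n \<in> F}))"
proof -
  define B where "B n = F - {m\<in>M. rsemi G act m0 gf m n \<in> F}" for n
  have "UU F \<subseteq> F \<union> (\<Union>n\<in>N. (\<lambda>m. act (gf m) (pp n)) ` B n)"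
  proof
    fix x assume "x \<in> UU F"
    then consider "x \<in> F" | m n where "m \<in> F" "n \<in> N" "x = act (gf m) (pp n)" unfolding UU_def by auto
    thus "x \<in> F \<union> (\<Union>n\<in>N. (\<lambda>m. act (gf m) (pp n)) ` B n)"
    proof cases
      case 1 thus ?thesis by simp
    next
      case 2
      show ?thesis
      proof (cases "x \<in> F")
        case True thus ?thesis by simp
      next
        case False
        have "rsemi G act m0 gf m n = x" using rsemi_eq 2 F N_sub by auto
        hence "m \<in> B n" using 2 False unfolding B_def by auto
        thus ?thesis using 2 by blast
      qed
    qed
  qed
  hence "card (UU F) \<le> card (F \<union> (\<Union>n\<in>N. (\<lambda>m. act (gf m) (pp n)) ` B n))"
    using F N_fin B_def by (intro card_mono) auto
  also have "\<dots> \<le> card F + card (\<Union>n\<in>N. (\<lambda>m. act (gf m) (pp n)) ` B n)" by (rule card_Un_le)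
  also have "card (\<Union>n\<in>N. (\<lambda>m. act (gf m) (pp n)) ` B n) \<le> (\<Sum>n\<in>N. card ((\<lambda>m. act (gf m) (pp n)) ` B n))"
    using N_fin by (rule card_UN_le)
  also have "\<dots> \<le> (\<Sum>n\<in>N. card (B n))" by (intro sum_mono card_image_le) (simp add: B_def F)
  finally show ?thesis unfolding B_def by simp
qed

lemma bound:
  assumes F: "finite F" "F \<subseteq> M" and T: "T \<subseteq> carrier G" "finite T" "tdisj T" "\<forall>h\<in>T. act h ` EE \<subseteq> F"
  shows "card ((\<lambda>y. restrict y F) ` (Del ` (M \<rightarrow>\<^sub>E Q))) * card Q ^ (card T * card EE)
      \<le> (card Q ^ card EE - 1) ^ card T * card Q ^ card (UU F)"
proof -
  define U where "U = UU F"
  have Ufin: "finite U" unfolding U_def using UU_fin F by simp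
  have UM: "U \<subseteq> M" unfolding U_def using UU_M F by simp
  have FU: "F \<subseteq> U" unfolding U_def UU_def by simp
  define b where "b h = act h ` EE" for h
  define p where "p h = restrict (\<lambda>x. c (act (inv h) x)) (b h)" for h
  define W where "W = {w \<in> U \<rightarrow>\<^sub>E Q. \<forall>h\<in>T. restrict w (b h) \<noteq> p h}"
  have cnt: "card W * card Q ^ (card T * card EE) \<le> (card Q ^ card EE - 1) ^ card T * card Q ^ card U"
    unfolding W_def
  proof (rule count_patterns[OF T(2) Ufin Qfin])
    show "\<forall>h\<in>T. b h \<subseteq> U \<and> card (b h) = card EE"
    proof
      fix h assume h: "h \<in> T"
      have "inj_on (act h) EE" using inj_prop[of h] h T EE_M inj_on_subset by blast
      thus "b h \<subseteq> U \<and> card (b h) = card EE" using T(4) h FU unfolding b_def by (auto simp: card_image)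
    qed
    show "\<forall>h\<in>T. \<forall>h'\<in>T. h \<noteq> h' \<longrightarrow> b h \<inter> b h' = {}" using T(3) unfolding tdisj_def b_def by blast
    show "\<forall>h\<in>T. p h \<in> b h \<rightarrow>\<^sub>E Q"
    proof
      fix h assume h: "h \<in> T"
      have hC: "h \<in> carrier G" using h T by auto
      have "\<And>x. x \<in> b h \<Longrightarrow> c (act (inv h) x) \<in> Q"
        using hC EE_M actM cQ unfolding b_def by (auto simp: PiE_iff)
      thus "p h \<in> b h \<rightarrow>\<^sub>E Q" unfolding p_def by (simp add: restrict_PiE_iff)
    qed
  qed
  obtain q0 where q0: "q0 \<in> Q" using Qne by auto
  define ext where "ext w = (\<lambda>m\<in>M. if m \<in> U then w m else q0)" for w :: "'m \<Rightarrow> 'q"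
  define Phi where "Phi w = restrict (Del (ext w)) F" for w
  have sub: "(\<lambda>y. restrict y F) ` (Del ` (M \<rightarrow>\<^sub>E Q)) \<subseteq> Phi ` W"
  proof
    fix y assume "y \<in> (\<lambda>y. restrict y F) ` (Del ` (M \<rightarrow>\<^sub>E Q))"
    then obtain z where z: "z \<in> M \<rightarrow>\<^sub>E Q" and y: "y = restrict (Del z) F" by blast
    obtain zs where zs: "zs \<in> M \<rightarrow>\<^sub>E Q" "Del zs = Del z" "\<forall>h\<in>T. \<exists>e\<in>EE. zs (act h e) \<noteq> c e"
      using tile_modify[OF T(1) T(3) z] by blast
    define w where "w = restrict zs U"
    have wU: "w \<in> U \<rightarrow>\<^sub>E Q" unfolding w_def using zs(1) UM by (auto simp: PiE_iff)
    have wc: "\<forall>h\<in>T. restrict w (b h) \<noteq> p h"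
    proof (intro ballI notI)
      fix h assume h: "h \<in> T" and eq: "restrict w (b h) = p h"
      obtain e where e: "e \<in> EE" "zs (act h e) \<noteq> c e" using zs(3) h by blast
      have hC: "h \<in> carrier G" using h T by auto
      have xb: "act h e \<in> b h" unfolding b_def using e by simp
      have xU: "act h e \<in> U" using xb T(4) h FU unfolding b_def by blast
      have "restrict w (b h) (act h e) = zs (act h e)" using xb xU unfolding w_def by simp
      moreover have "p h (act h e) = c e" using xb act_inv1 hC e EE_M unfolding p_def by auto
      ultimately show False using eq e by simp
    qed
    have "w \<in> W" unfolding W_def using wU wc by simp
    moreover have "y = Phi w"
    proof -
      have "Phi w = restrict (Del zs) F" unfolding Phi_def
      proof (rule restrict_ext)
        fix m assume m: "m \<in> F"
        have mM: "m \<in> M" using m F by auto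
        show "Del (ext w) m = Del zs m"
        proof (rule Delta_local[OF mM])
          fix n assume n: "n \<in> N"
          have xU: "act (gf m) (pp n) \<in> U" unfolding U_def using UU_nb m n by simp
          hence xM: "act (gf m) (pp n) \<in> M" using UM by auto
          show "ext w (act (gf m) (pp n)) = zs (act (gf m) (pp n))"
            unfolding ext_def w_def using xU xM by simp
        qed
      qed
      thus ?thesis using y zs(2) by simp
    qed
    ultimately show "y \<in> Phi ` W" by blast
  qed
  have Wfin: "finite W" unfolding W_def
    by (rule finite_subset[OF _ finite_PiE[OF Ufin, of "\<lambda>_. Q"]]) (use Qfin in auto)
  have "card ((\<lambda>y. restrict y F) ` (Del ` (M \<rightarrow>\<^sub>E Q))) \<le> card W"
    using card_mono[OF finite_imageI[OF Wfin] sub] card_image_le[OF Wfin, of Phi] by simp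
  hence "card ((\<lambda>y. restrict y F) ` (Del ` (M \<rightarrow>\<^sub>E Q))) * card Q ^ (card T * card EE)
      \<le> card W * card Q ^ (card T * card EE)" by (rule mult_right_mono) simp
  also have "\<dots> \<le> (card Q ^ card EE - 1) ^ card T * card Q ^ card U" by (rule cnt)
  finally show ?thesis unfolding U_def .
qed

end



context CB begin

lemma density: assumes F: "finite F" "F \<subseteq> M"
  shows "\<exists>T. T \<subseteq> carrier G \<and> finite T \<and> tdisj T \<and> (\<forall>h\<in>T. act h ` EE \<subseteq> F) \<and>
     card F \<le> card T * (card EE * card EE * card G0) + (\<Sum>e\<in>EE. card (F - {m\<in>M. rsemi G act m0 gf m (gf e <# G0) \<in> F}))"
proof -
  define H where "H = {h\<in>carrier G. act h ` EE \<subseteq> F}"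
  obtain e0 where e0: "e0 \<in> EE" using EE_ne by auto
  have e0M: "e0 \<in> M" using e0 EE_M by auto
  have Hfin: "finite H"
  proof -
    have "H \<subseteq> (\<Union>f\<in>F. {h\<in>carrier G. act h e0 = f})" unfolding H_def using e0 by blast
    moreover have "finite (\<Union>f\<in>F. {h\<in>carrier G. act h e0 = f})" using F(1) stab_fin[OF e0M] by blast
    ultimately show ?thesis by (rule finite_subset)
  qed
  define Fam where "Fam = {T. T \<subseteq> H \<and> tdisj T}"
  have Famfin: "finite Fam"
  proof (rule finite_subset)
    show "Fam \<subseteq> Pow H" unfolding Fam_def by auto
    show "finite (Pow H)" using Hfin by simp
  qed
  have "{} \<in> Fam" unfolding Fam_def tdisj_def by simp
  then obtain T where T: "T \<in> Fam" and Tmax: "\<And>T'. T' \<in> Fam \<Longrightarrow> T \<subseteq> T' \<Longrightarrow> T = T'"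
    using finite_has_maximal[OF Famfin] by blast
  have TH: "T \<subseteq> H" and dT: "tdisj T" using T unfolding Fam_def by auto
  have TC: "T \<subseteq> carrier G" using TH unfolding H_def by auto
  have Tfin: "finite T" using TH Hfin finite_subset by blast
  have TF: "\<forall>h\<in>T. act h ` EE \<subseteq> F" using TH unfolding H_def by auto
  define Fm where "Fm = {m\<in>F. act (gf m) ` EE \<subseteq> F}"
  define R where "R e = F - {m\<in>M. rsemi G act m0 gf m (gf e <# G0) \<in> F}" for e
  define S where "S h e e' = (\<lambda>g. act g m0) ` {g\<in>carrier G. act g e = act h e'}" for h e e'
  have c1: "F - Fm \<subseteq> (\<Union>e\<in>EE. R e)"
  proof
    fix m assume m: "m \<in> F - Fm"
    then obtain e where e: "e \<in> EE" "act (gf m) e \<notin> F" unfolding Fm_def by blast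
    have eM: "e \<in> M" using e EE_M by auto
    have mM: "m \<in> M" using m F by auto
    have "rsemi G act m0 gf m (gf e <# G0) = act (gf m) (pp (gf e <# G0))"
      using rsemi_eq[OF mM cos_of(1)[OF eM]] .
    hence "rsemi G act m0 gf m (gf e <# G0) = act (gf m) e" using cos_of(2)[OF eM] by simp
    hence "m \<in> R e" using e(2) m unfolding R_def by simp
    thus "m \<in> (\<Union>e\<in>EE. R e)" using e(1) by blast
  qed
  have c2: "Fm \<subseteq> (\<Union>h\<in>T. \<Union>e\<in>EE. \<Union>e'\<in>EE. S h e e')"
  proof
    fix m assume m: "m \<in> Fm"
    have mM: "m \<in> M" using m F unfolding Fm_def by auto
    have gH: "gf m \<in> H" using m gfC mM unfolding Fm_def H_def by auto
    have "\<exists>h\<in>T. \<exists>e\<in>EE. \<exists>e'\<in>EE. act (gf m) e = act h e'"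
    proof (cases "gf m \<in> T")
      case True thus ?thesis using e0 by blast
    next
      case False
      show ?thesis
      proof (rule ccontr)
        assume nex: "\<not> ?thesis"
        have nex2: "\<forall>h\<in>T. act (gf m) ` EE \<inter> act h ` EE = {}" using nex by blast
        have "tdisj (insert (gf m) T)" unfolding tdisj_def
        proof (intro ballI impI)
          fix h h' assume h: "h \<in> insert (gf m) T" and h': "h' \<in> insert (gf m) T" and hh: "h \<noteq> h'"
          show "act h ` EE \<inter> act h' ` EE = {}"
          proof (cases "h = gf m")
            case True thus ?thesis using nex2 h' hh by auto
          next
            case False
            show ?thesis
            proof (cases "h' = gf m")
              case True thus ?thesis using nex2 h hh by auto
            next
              case False
              thus ?thesis using \<open>h \<noteq> gf m\<close> h h' hh dT unfolding tdisj_def by simp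
            qed
          qed
        qed
        hence "insert (gf m) T \<in> Fam" unfolding Fam_def using TH gH by auto
        hence "T = insert (gf m) T" using Tmax by blast
        thus False using False by blast
      qed
    qed
    then obtain h e e' where "h \<in> T" "e \<in> EE" "e' \<in> EE" "act (gf m) e = act h e'" by blast
    moreover have "m = act (gf m) m0" using gfA mM by simp
    ultimately show "m \<in> (\<Union>h\<in>T. \<Union>e\<in>EE. \<Union>e'\<in>EE. S h e e')" unfolding S_def using gfC mM by blast
  qed
  have Sc: "card (S h e e') \<le> card G0" if "e \<in> EE" for h e e'
    using stab_fin2[of e] that EE_M unfolding S_def by auto
  have "card Fm \<le> card (\<Union>h\<in>T. \<Union>e\<in>EE. \<Union>e'\<in>EE. S h e e')"
  proof (rule card_mono[OF _ c2])
    have "\<And>h e e'. e \<in> EE \<Longrightarrow> finite (S h e e')" unfolding S_def using stab_fin2 EE_M by blast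
    thus "finite (\<Union>h\<in>T. \<Union>e\<in>EE. \<Union>e'\<in>EE. S h e e')" using Tfin EE_fin by blast
  qed
  also have "\<dots> \<le> (\<Sum>h\<in>T. card (\<Union>e\<in>EE. \<Union>e'\<in>EE. S h e e'))" using Tfin by (rule card_UN_le)
  also have "\<dots> \<le> (\<Sum>h\<in>T. card EE * card EE * card G0)"
  proof (rule sum_mono)
    fix h assume "h \<in> T"
    have "card (\<Union>e\<in>EE. \<Union>e'\<in>EE. S h e e') \<le> (\<Sum>e\<in>EE. card (\<Union>e'\<in>EE. S h e e'))" using EE_fin by (rule card_UN_le)
    also have "\<dots> \<le> (\<Sum>e\<in>EE. (\<Sum>e'\<in>EE. card (S h e e')))" using EE_fin by (intro sum_mono card_UN_le)
    also have "\<dots> \<le> (\<Sum>e\<in>EE. (\<Sum>e'\<in>EE. card G0))" using Sc by (intro sum_mono) auto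
    finally show "card (\<Union>e\<in>EE. \<Union>e'\<in>EE. S h e e') \<le> card EE * card EE * card G0" by simp
  qed
  finally have cFm: "card Fm \<le> card T * (card EE * card EE * card G0)" by simp
  have "card (F - Fm) \<le> card (\<Union>e\<in>EE. R e)" using c1 EE_fin F by (intro card_mono) (auto simp: R_def)
  also have "\<dots> \<le> (\<Sum>e\<in>EE. card (R e))" using EE_fin by (rule card_UN_le)
  finally have cR: "card (F - Fm) \<le> (\<Sum>e\<in>EE. card (R e))" .
  have "card F \<le> card Fm + card (F - Fm)"
  proof -
    have "F = Fm \<union> (F - Fm)" unfolding Fm_def by auto
    thus ?thesis by (metis card_Un_le)
  qed
  hence "card F \<le> card T * (card EE * card EE * card G0) + (\<Sum>e\<in>EE. card (R e))" using cFm cR by linarith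
  thus ?thesis using TC Tfin dT TF unfolding R_def by blast
qed

end



context CB begin

lemma G0_ne: "card G0 \<ge> 1"
  using stabilizer_one_closed[OF m0M] G0fin by (metis One_nat_def Suc_leI card_gt_0_iff empty_iff)

lemma EE_card: "card EE \<ge> 1" using EE_fin EE_ne by (simp add: Suc_leI card_gt_0_iff)

lemma main:
  assumes fol: "right_folner_net G M act m0 gf I rel F" and q2: "card Q \<ge> 2"
  shows "entropy I rel F (Del ` (M \<rightarrow>\<^sub>E Q)) < ereal (ln (real (card Q)))"
proof -
  define q where "q = real (card Q)"
  define e where "e = card EE"
  define K where "K = card EE * card EE * card G0"
  have "1 * 1 * 1 \<le> card EE * card EE * card G0" using EE_card G0_ne by (intro mult_le_mono)
  hence K1: "1 \<le> K" unfolding K_def by (simp only: mult_1)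
  have Kpos: "real K \<ge> 1" using of_nat_mono[OF K1] by simp
  define L where "L = ln q"
  have q2r: "q \<ge> 2" unfolding q_def using q2 by simp
  have Lpos: "L > 0" unfolding L_def using q2r by simp
  have e1: "e \<ge> 1" unfolding e_def using EE_card .
  have "q ^ 1 \<le> q ^ e" by (rule power_increasing) (use e1 q2r in auto)
  hence qe2: "q ^ e \<ge> 2" using q2r by simp
  define beta where "beta = ln (q ^ e) - ln (q ^ e - 1)"
  have bpos: "beta > 0" unfolding beta_def using qe2 by simp
  define eps where "eps = beta / (4 * K * L)"
  have epos: "eps > 0" unfolding eps_def using bpos Kpos Lpos by simp
  define C where "C = L - beta / (4 * K)"
  have CL: "C < L" unfolding C_def using bpos Kpos by simp
  define r1 where "r1 = eps / (real (card N) + 1)"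
  define r2 where "r2 = 1 / (2 * (real (card EE) + 1))"
  have r1pos: "r1 > 0" unfolding r1_def using epos by simp
  have r2pos: "r2 > 0" unfolding r2_def by simp
  define ratio where "ratio C i = real (card (F i - {m \<in> M. rsemi G act m0 gf m C \<in> F i})) / real (card (F i))" for C i
  have dir: "directed_set I rel" and FI: "\<forall>i\<in>I. F i \<subseteq> M \<and> finite (F i) \<and> F i \<noteq> {}"
    and lim: "\<forall>C\<in>lcosets0 G act m0. ((\<lambda>i. ratio C i) \<longlongrightarrow> 0) (net_filter I rel)"
    using fol unfolding right_folner_net_def ratio_def by auto
  obtain i0 where i0: "i0 \<in> I" using dir unfolding directed_set_def by auto
  have evI: "eventually (\<lambda>i. i \<in> I) (net_filter I rel)"
    unfolding net_filter_def by (rule eventually_INF1[OF i0]) (simp add: eventually_principal)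
  have ev1: "eventually (\<lambda>i. \<forall>n\<in>N. ratio n i < r1) (net_filter I rel)"
    using N_fin
  proof (rule eventually_ball_finite, intro ballI)
    fix n assume "n \<in> N"
    hence "n \<in> lcosets0 G act m0" using N_sub by auto
    thus "eventually (\<lambda>i. ratio n i < r1) (net_filter I rel)" using lim r1pos order_tendstoD(2) by blast
  qed
  have ev2: "eventually (\<lambda>i. \<forall>x\<in>EE. ratio (gf x <# G0) i < r2) (net_filter I rel)"
    using EE_fin
  proof (rule eventually_ball_finite, intro ballI)
    fix x assume "x \<in> EE"
    hence "gf x <# G0 \<in> lcosets0 G act m0" using cos_of EE_M by auto
    thus "eventually (\<lambda>i. ratio (gf x <# G0) i < r2) (net_filter I rel)" using lim r2pos order_tendstoD(2) by blast
  qed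
  have key: "ln (real (card ((\<lambda>c. restrict c (F i)) ` (Del ` (M \<rightarrow>\<^sub>E Q))))) / real (card (F i)) \<le> C"
    if i: "i \<in> I" and h1: "\<forall>n\<in>N. ratio n i < r1" and h2: "\<forall>x\<in>EE. ratio (gf x <# G0) i < r2" for i
  proof -
    have Fi: "F i \<subseteq> M" "finite (F i)" "F i \<noteq> {}" using FI i by auto
    define f where "f = real (card (F i))"
    have fpos: "f > 0" unfolding f_def using Fi by (simp add: card_gt_0_iff)
    define Y where "Y = (\<lambda>c. restrict c (F i)) ` (Del ` (M \<rightarrow>\<^sub>E Q))"
    define A where "A = real (card Y)"
    have Yfin: "finite Y"
    proof (rule finite_subset)
      show "Y \<subseteq> F i \<rightarrow>\<^sub>E Q" unfolding Y_def using Delta_PiE Fi by (auto simp: PiE_iff)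
      show "finite (F i \<rightarrow>\<^sub>E Q)" using Fi Qfin by (simp add: finite_PiE)
    qed
    have Yne: "Y \<noteq> {}" unfolding Y_def using Qne by (simp add: PiE_eq_empty_iff)
    have Apos: "A \<ge> 1" unfolding A_def using Yfin Yne by (simp add: Suc_leI card_gt_0_iff)
    obtain T where T: "T \<subseteq> carrier G" "finite T" "tdisj T" "\<forall>h\<in>T. act h ` EE \<subseteq> F i"
      and dens: "card (F i) \<le> card T * K + (\<Sum>x\<in>EE. card (F i - {m\<in>M. rsemi G act m0 gf m (gf x <# G0) \<in> F i}))"
      using density[OF Fi(2) Fi(1)] unfolding K_def by blast
    define k where "k = real (card T)"
    define u where "u = real (card (UU (F i)))"
    have bnd: "card Y * card Q ^ (card T * e) \<le> (card Q ^ e - 1) ^ card T * card Q ^ card (UU (F i))"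
      using bound[OF Fi(2) Fi(1) T] unfolding Y_def e_def .
    have qe1: "card Q ^ e \<ge> 1" using q2 by simp
    have bndr: "A * q ^ (card T * e) \<le> (q ^ e - 1) ^ card T * q ^ card (UU (F i))"
    proof -
      have "real (card Y * card Q ^ (card T * e)) \<le> real ((card Q ^ e - 1) ^ card T * card Q ^ card (UU (F i)))"
        using bnd by (rule of_nat_mono)
      thus ?thesis unfolding A_def q_def using qe1 by (simp add: of_nat_diff)
    qed
    have lnA: "ln A \<le> u * L - k * beta"
    proof -
      have p1: "A * q ^ (card T * e) > 0" using Apos q2r by simp
      have "ln (A * q ^ (card T * e)) \<le> ln ((q ^ e - 1) ^ card T * q ^ card (UU (F i)))"
        using bndr p1 by simp
      moreover have "ln (A * q ^ (card T * e)) = ln A + k * ln (q ^ e)"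
        using Apos q2r unfolding k_def by (simp add: ln_mult ln_realpow power_mult)
      moreover have "ln ((q ^ e - 1) ^ card T * q ^ card (UU (F i))) = k * ln (q ^ e - 1) + u * L"
        using qe2 q2r unfolding k_def u_def L_def by (simp add: ln_mult ln_realpow)
      ultimately show ?thesis unfolding beta_def by (simp add: algebra_simps)
    qed
    have sum1: "real (\<Sum>n\<in>N. card (F i - {m\<in>M. rsemi G act m0 gf m n \<in> F i})) \<le> real (card N) * r1 * f"
    proof -
      have "real (\<Sum>n\<in>N. card (F i - {m\<in>M. rsemi G act m0 gf m n \<in> F i})) = (\<Sum>n\<in>N. ratio n i * f)"
        unfolding ratio_def f_def using fpos f_def by simp
      also have "\<dots> \<le> (\<Sum>n\<in>N. r1 * f)" using h1 fpos by (intro sum_mono) (auto intro: less_imp_le)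
      finally show ?thesis by simp
    qed
    have sum2: "real (\<Sum>x\<in>EE. card (F i - {m\<in>M. rsemi G act m0 gf m (gf x <# G0) \<in> F i})) \<le> real (card EE) * r2 * f"
    proof -
      have "real (\<Sum>x\<in>EE. card (F i - {m\<in>M. rsemi G act m0 gf m (gf x <# G0) \<in> F i})) = (\<Sum>x\<in>EE. ratio (gf x <# G0) i * f)"
        unfolding ratio_def f_def using fpos f_def by simp
      also have "\<dots> \<le> (\<Sum>x\<in>EE. r2 * f)" using h2 fpos by (intro sum_mono) (auto intro: less_imp_le)
      finally show ?thesis by simp
    qed
    have cN: "real (card N) * r1 \<le> eps" unfolding r1_def using epos by (simp add: field_simps)
    have cE: "real (card EE) * r2 \<le> 1/2" unfolding r2_def by (simp add: field_simps)
    have ub: "u \<le> f + eps * f"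
    proof -
      have "u \<le> f + real (\<Sum>n\<in>N. card (F i - {m\<in>M. rsemi G act m0 gf m n \<in> F i}))"
        using of_nat_mono[OF UU_card[OF Fi(2) Fi(1)]] unfolding u_def f_def by simp
      also have "\<dots> \<le> f + real (card N) * r1 * f" using sum1 by simp
      also have "\<dots> \<le> f + eps * f" using mult_right_mono[OF cN, of f] fpos by simp
      finally show ?thesis .
    qed
    have kb: "f / 2 \<le> k * K"
    proof -
      have "f \<le> k * K + real (\<Sum>x\<in>EE. card (F i - {m\<in>M. rsemi G act m0 gf m (gf x <# G0) \<in> F i}))"
        using of_nat_mono[OF dens] unfolding f_def k_def by simp
      also have "\<dots> \<le> k * K + real (card EE) * r2 * f" using sum2 by simp
      also have "\<dots> \<le> k * K + f / 2" using cE fpos mult_right_mono[OF cE, of f] by simp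
      finally show ?thesis by simp
    qed
    have kb2: "k * beta \<ge> f / (2 * K) * beta"
    proof -
      have "f / (2 * K) \<le> k" using kb Kpos by (simp add: field_simps)
      thus ?thesis using mult_right_mono[of "f / (2 * K)" k beta] bpos by simp
    qed
    have "ln A \<le> (f + eps * f) * L - f / (2 * K) * beta"
      using lnA ub kb2 Lpos mult_right_mono[OF ub, of L] by linarith
    also have "\<dots> = f * C"
      unfolding C_def eps_def using Kpos Lpos by (simp add: field_simps)
    finally have "ln A \<le> f * C" .
    thus ?thesis unfolding A_def[symmetric] Y_def[symmetric] f_def[symmetric] using fpos
      by (simp add: divide_le_eq mult.commute)
  qed
  have "eventually (\<lambda>i. ereal (ln (real (card ((\<lambda>c. restrict c (F i)) ` (Del ` (M \<rightarrow>\<^sub>E Q))))) / real (card (F i))) \<le> ereal C) (net_filter I rel)"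
    using evI ev1 ev2 by eventually_elim (use key in simp)
  hence "entropy I rel F (Del ` (M \<rightarrow>\<^sub>E Q)) \<le> ereal C"
    unfolding entropy_def by (rule Limsup_bounded)
  also have "\<dots> < ereal (ln (real (card Q)))" using CL unfolding L_def q_def by simp
  finally show ?thesis .
qed

end



theorem theorem6:
  fixes G :: "('g, 'b) monoid_scheme" and M :: "'m set" and act :: "'g \<Rightarrow> 'm \<Rightarrow> 'm"
    and m0 :: 'm and gf :: "'m \<Rightarrow> 'g"
    and Q :: "'q set" and N :: "'g set set" and \<delta> :: "('g set \<Rightarrow> 'q) \<Rightarrow> 'q"
    and I :: "'i set" and rel :: "'i \<Rightarrow> 'i \<Rightarrow> bool" and F :: "'i \<Rightarrow> 'm set"
  assumes cs: "cell_space G M act m0 gf"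
    and amen: "right_amenable G M act m0 gf"
    and G0_fin: "finite (stab0 G act m0)"
    and Q_fin: "finite Q" and Q_two: "card Q \<ge> 2"
    and N_sub: "N \<subseteq> lcosets0 G act m0" and N_fin: "finite N"
    and N_inv: "\<forall>g0\<in>stab0 G act m0. \<forall>n\<in>N. g0 <#\<^bsub>G\<^esub> n \<in> N"
    and \<delta>_Q: "\<forall>l\<in>N \<rightarrow>\<^sub>E Q. \<delta> l \<in> Q"
    and folner: "right_folner_net G M act m0 gf I rel F"
    and inv: "bullet_invariant G act m0 Q N \<delta>"
    and not_preinj: "\<not> pre_injective M Q (global_trans G M act m0 gf N \<delta>)"
  shows "entropy I rel F ((global_trans G M act m0 gf N \<delta>) ` (M \<rightarrow>\<^sub>E Q))
           < ereal (ln (real (card Q)))"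
proof -
  have ta: "transitive_action G M act" and m0: "m0 \<in> M"
    and gfp: "\<forall>m\<in>M. gf m \<in> carrier G \<and> act (gf m) m0 = m"
    using cs unfolding cell_space_def by auto
  have ga: "group_action G M act" using ta by (rule transitive_action.axioms(1))
  obtain c c' where c: "c \<in> M \<rightarrow>\<^sub>E Q" and c': "c' \<in> M \<rightarrow>\<^sub>E Q"
    and fin: "finite {m\<in>M. c m \<noteq> c' m}" and eq: "global_trans G M act m0 gf N \<delta> c = global_trans G M act m0 gf N \<delta> c'"
    and ne: "c \<noteq> c'"
    using not_preinj unfolding pre_injective_def by blast
  have Dne: "{m\<in>M. c m \<noteq> c' m} \<noteq> {}"
  proof
    assume a: "{m\<in>M. c m \<noteq> c' m} = {}"
    have "c = c'"
    proof
      fix x show "c x = c' x"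
      proof (cases "x \<in> M")
        case True thus ?thesis using a by blast
      next
        case False thus ?thesis using PiE_arb[OF c False] PiE_arb[OF c' False] by simp
      qed
    qed
    thus False using ne by simp
  qed
  have Qne: "Q \<noteq> {}" using Q_two by auto
  have CB: "CB G M act m0 gf Q N \<delta> c c'"
  proof (intro CB.intro CA.intro CS.intro CA_axioms.intro CB_axioms.intro CS_axioms.intro)
    show "group_action G M act" by (rule ga)
    show "m0 \<in> M" by (rule m0)
    show "\<And>m. m \<in> M \<Longrightarrow> gf m \<in> carrier G" using gfp by blast
    show "\<And>m. m \<in> M \<Longrightarrow> act (gf m) m0 = m" using gfp by blast
    show "finite (stabilizer G act m0)" using G0_fin unfolding stab0_def .
  qed (use Q_fin Qne N_sub N_fin N_inv \<delta>_Q inv c c' fin Dne eq in auto)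
  show ?thesis using CB.main[OF CB folner Q_two] .
qed



end
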